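(* Let $S$ be a smooth Del Pezzo surface, let $E\subset S$ be a smooth effective anticanonical divisor, let $\beta\in H_2(S,\mathbb{Z})$ be an effective non-zero primitive curve class, and set $w=E\cdot\beta$. Let $\{N_S[dw]\}_{d\ge1}$ and $\{I_{K_S}(d\beta)\}_{d\ge1}$ be two arbitrary sequences of rational numbers, and assume that for all $d\ge1$, $$N_S[dw]=(-1)^{dw+1}\,dw\,I_{K_S}(d\beta).$$ Define sequences of rational numbers $\{n_{d\beta}\}_{d\ge1}$ and $\{n_S[dw]\}_{d\ge1}$ by the equalities of formal power series in $q$ $$\sum_{l=1}^{\infty}I_{K_S}(l\beta)\,q^l=\sum_{d=1}^{\infty}n_{d\beta}\sum_{k=1}^{\infty}\frac{1}{k^3}\,q^{dk},$$ $$\sum_{l=1}^{\infty}N_S[lw]\,q^l=\sum_{d=1}^{\infty}n_S[dw]\sum_{k=1}^{\infty}\frac{1}{k^2}\binom{k(dw-1)-1}{k-1}\,q^{dk}.$$ Then $n_S[dw]\in\mathbb{Z}$ for all $d\ge1$ if and only if $dw\cdot n_{d\beta}\in\mathbb{Z}$ for all $d\ge1$.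
   Context: Binomial coefficients $\binom{n}{m}$ with $n\in\mathbb{Z}$ and $m\ge0$ an integer are understood as $n(n-1)\cdots(n-m+1)/m!$. The two power-series identities determine the sequences $n_{d\beta}$ and $n_S[dw]$ uniquely (by comparing coefficients of $q^d$ recursively in $d$). *)

theory Defs
  imports Complex_Main
begin

end

theory Submission
  imports Defs "HOL-Number_Theory.Number_Theory"
begin


function tt :: "(nat \<Rightarrow> int) \<Rightarrow> nat \<Rightarrow> int" where
 "tt u k = (u k - (\<Sum>j\<in>{j. j dvd k \<and> j < k}. int (j^2) * tt u j)) div int (k^2)"
  by auto
termination by (relation "measure snd") auto

declare tt.simps[simp del]

lemma sq_dvd_crit:
  fixes X :: int and k :: nat
  assumes k: "k \<ge> 1"
    and h: "\<And>p. prime p \<Longrightarrow> int p ^ (2 * multiplicity p k) dvd X"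
  shows "int (k^2) dvd X"
proof (cases "X = 0")
  case True then show ?thesis by simp
next
  case X0: False
  have "k^2 dvd nat \<bar>X\<bar>"
  proof (rule multiplicity_le_imp_dvd)
    show "k^2 \<noteq> 0" using k by simp
    fix p :: nat assume p: "prime p"
    show "multiplicity p (k^2) \<le> multiplicity p (nat \<bar>X\<bar>)"
    proof -
      have "int (p ^ (2 * multiplicity p k)) dvd X" using h[OF p] by simp
      then have "p ^ (2 * multiplicity p k) dvd nat \<bar>X\<bar>" by (simp add: dvd_nat_abs_iff)
      then have "2 * multiplicity p k \<le> multiplicity p (nat \<bar>X\<bar>)"
        using X0 p by (intro multiplicity_geI) (auto simp: prime_gt_1_nat)
      moreover have "multiplicity p (k^2) = 2 * multiplicity p k"
        using p k by (subst prime_elem_multiplicity_power_distrib) auto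
      ultimately show ?thesis by simp
    qed
  qed
  then show ?thesis by (simp add: dvd_nat_abs_iff)
qed

lemma pow_dvd_aux:
  fixes p r m j :: nat
  assumes p: "prime p" and r: "r \<ge> 1" and j: "j dvd p^r * m" and nj: "\<not> j dvd p^(r-1) * m"
  shows "p^r dvd j"
proof -
  obtain b c where bc: "j = b*c" "b dvd p^r" "c dvd m" using division_decomp[OF j] by blast
  then obtain i where i: "i \<le> r" "b = p^i" using divides_primepow_nat[OF p] by blast
  show ?thesis
  proof (cases "i = r")
    case True then show ?thesis using bc i by simp
  next
    case False
    then have "b dvd p^(r-1)" using i by (simp add: le_imp_power_dvd)
    then have "j dvd p^(r-1)*m" using bc by (simp add: mult_dvd_mono)
    then show ?thesis using nj by simp
  qed
qed

lemma tt_ok: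
  fixes u :: "nat \<Rightarrow> int"
  assumes cong: "\<And>p r m. prime p \<Longrightarrow> r \<ge> 1 \<Longrightarrow> \<not> p dvd m \<Longrightarrow>
      [u (p^r*m) = u (p^(r-1)*m)] (mod int p^(2*r))"
  shows "k \<ge> 1 \<Longrightarrow> u k = (\<Sum>j\<in>{j. j dvd k}. int (j^2) * tt u j)"
proof (induction k rule: less_induct)
  case (less k)
  define S where "S = (\<Sum>j\<in>{j. j dvd k \<and> j < k}. int (j^2) * tt u j)"
  have dv: "int (k^2) dvd (u k - S)"
  proof (rule sq_dvd_crit[OF less.prems])
    fix p :: nat assume p: "prime p"
    define r where "r = multiplicity p k"
    have k0: "k \<noteq> 0" using less.prems by simp
    have pu: "\<not> is_unit p" using p not_prime_unit by blast
    obtain m where km: "k = p^r * m" and pm: "\<not> p dvd m"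
      unfolding r_def by (rule multiplicity_decompose'[OF k0 pu])
    have "int p ^ (2 * r) dvd (u k - S)"
    proof (cases "r = 0")
      case True then show ?thesis by simp
    next
      case False
      then have r1: "r \<ge> 1" by simp
      define k' where "k' = p^(r-1)*m"
      have "p^r = p * p^(r-1)" using r1 by (cases r) auto
      then have kk': "k = p * k'" unfolding k'_def km by simp
      have m0: "m \<noteq> 0" proof assume "m = 0" then show False using pm by simp qed
      have "p \<noteq> 0" using p by auto
      then have k'1: "k' \<ge> 1" unfolding k'_def using m0 by (simp add: Suc_le_eq)
      have k'k: "k' < k" using kk' k'1 prime_gt_1_nat[OF p] by simp
      have IH: "u k' = (\<Sum>j\<in>{j. j dvd k'}. int (j^2) * tt u j)"
        using less.IH[OF k'k k'1] .
      define A where "A = {j. j dvd k'}"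
      define B where "B = {j. j dvd k \<and> j < k \<and> \<not> j dvd k'}"
      have split: "{j. j dvd k \<and> j < k} = A \<union> B"
      proof -
        have "j < k" if "j dvd k'" for j using dvd_imp_le[OF that] k'1 k'k by linarith
        moreover have "j dvd k" if "j dvd k'" for j using that kk' by simp
        ultimately show ?thesis unfolding A_def B_def by blast
      qed
      have fin: "finite A" "finite B"
      proof -
        show "finite A" unfolding A_def using k'1 by simp
        have "B \<subseteq> {j. j dvd k}" unfolding B_def by blast
        then show "finite B" by (rule finite_subset) (use less.prems in simp)
      qed
      have disj: "A \<inter> B = {}" unfolding A_def B_def by auto
      have S: "S = u k' + (\<Sum>j\<in>B. int (j^2) * tt u j)"
        unfolding S_def split using fin disj IH A_def by (simp add: sum.union_disjoint)
      have "int p ^ (2*r) dvd (\<Sum>j\<in>B. int (j^2) * tt u j)"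
      proof (rule dvd_sum)
        fix j assume "j \<in> B"
        then have "p^r dvd j" using pow_dvd_aux[OF p r1, of j m] km k'_def B_def by auto
        then have "int p ^ r dvd int j" using of_nat_dvd_iff[of "p^r" j] by simp
        then have "(int p ^ r)^2 dvd (int j)^2" by (rule dvd_power_same)
        then have "int p ^ (2*r) dvd int (j^2)" by (simp add: power_mult[symmetric] mult.commute)
        then show "int p ^ (2*r) dvd int (j^2) * tt u j" by simp
      qed
      moreover have "int p ^ (2*r) dvd (u k - u k')"
        using cong[OF p r1 pm] km k'_def by (simp add: cong_iff_dvd_diff dvd_diff_commute)
      moreover have "u k - S = (u k - u k') - (\<Sum>j\<in>B. int (j^2) * tt u j)" unfolding S by simp
      ultimately show ?thesis by (metis dvd_diff)
    qed
    then show "int p ^ (2 * multiplicity p k) dvd (u k - S)" using r_def by simp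
  qed
  have eq: "tt u k = (u k - S) div int (k^2)"
    by (subst tt.simps) (simp add: S_def)
  have dk: "{j. j dvd k} = insert k {j. j dvd k \<and> j < k}"
    using less.prems by (auto dest: dvd_imp_le)
  have "(\<Sum>j\<in>{j. j dvd k}. int (j^2) * tt u j) = int (k^2) * tt u k + S"
    unfolding dk S_def using less.prems by (subst sum.insert) auto
  also have "\<dots> = u k" using dv eq by simp
  finally show ?case by simp
qed



lemma F1:
  fixes k a :: nat
  assumes k: "k \<ge> 1" and a: "a \<ge> 1"
  shows "int (fact (k-1)) * int (binomial (k*a-1) (k-1)) = (\<Prod>i\<in>{1..<k}. int (k*a) - int i)"
proof -
  have ka: "k*a \<ge> 1" using k a by simp
  have "(of_int (int (fact (k-1)) * int (binomial (k*a-1) (k-1))) :: rat)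
      = fact (k-1) * (of_nat (k*a-1) gchoose (k-1))"
    by (simp add: binomial_gbinomial)
  also have "\<dots> = (\<Prod>i = 0..<k-1. of_nat (k*a-1) - of_nat i)"
    by (rule gbinomial_mult_fact)
  also have "\<dots> = (\<Prod>i = 0..<k-1. of_nat (k*a) - of_nat (i+1))"
    using ka by (intro prod.cong) (auto simp: of_nat_diff)
  also have "\<dots> = (\<Prod>i = 1..<k. of_nat (k*a) - of_nat i)"
    using prod.shift_bounds_nat_ivl[of "\<lambda>i. of_nat (k*a) - (of_nat i :: rat)" 0 1 "k-1"] k
    by simp
  also have "\<dots> = of_int (\<Prod>i\<in>{1..<k}. int (k*a) - int i)" by simp
  finally show ?thesis by (simp only: of_int_eq_iff)
qed

lemma pair_prod:
  fixes M :: nat and S :: "nat set" and x q :: int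
  assumes fin: "finite S" and sub: "S \<subseteq> {1..<M}" and refl: "\<And>i. i \<in> S \<Longrightarrow> M - i \<in> S"
    and mid: "\<And>i. i \<in> S \<Longrightarrow> 2*i \<noteq> M" and qx: "q dvd x" and qM: "q dvd int M"
  shows "[(\<Prod>i\<in>S. x - int i) = (\<Prod>i\<in>S. int i)] (mod q^2)"
proof -
  define T where "T = {i\<in>S. 2*i < M}"
  have ST: "S = T \<union> (\<lambda>i. M - i) ` T"
  proof
    show "S \<subseteq> T \<union> (\<lambda>i. M - i) ` T"
    proof
      fix i assume i: "i \<in> S"
      show "i \<in> T \<union> (\<lambda>i. M - i) ` T"
      proof (cases "2*i < M")
        case True then show ?thesis using i T_def by auto
      next
        case False
        then have "2*i > M" using mid[OF i] by simp
        moreover have "i < M" using sub i by auto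
        ultimately have "M - i \<in> T" "i = M - (M - i)" using refl[OF i] T_def by auto
        then show ?thesis by blast
      qed
    qed
  next
    show "T \<union> (\<lambda>i. M - i) ` T \<subseteq> S" using refl T_def by auto
  qed
  have disj: "T \<inter> (\<lambda>i. M - i) ` T = {}" using T_def by auto
  have inj: "inj_on (\<lambda>i. M - i) T" using T_def sub by (auto simp: inj_on_def)
  have finT: "finite T" using fin T_def by simp
  have TM: "\<And>i. i \<in> T \<Longrightarrow> i < M" using T_def sub by auto
  have P: "\<And>f. (\<Prod>i\<in>S. f i) = (\<Prod>i\<in>T. f i * f (M - i))"
    by (subst ST, subst prod.union_disjoint) (use finT disj inj in \<open>auto simp: prod.reindex prod.distrib\<close>)
  have "[(\<Prod>i\<in>T. (x - int i) * (x - int (M - i))) = (\<Prod>i\<in>T. int i * int (M - i))] (mod q^2)"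
  proof (rule cong_prod)
    fix i assume i: "i \<in> T"
    have iM: "int (M - i) = int M - int i" using TM[OF i] by simp
    have "(x - int i) * (x - int (M - i)) = int i * int (M - i) + x * (x - int M)"
      unfolding iM by (simp add: algebra_simps)
    moreover have "q^2 dvd x * (x - int M)" using qx qM
      by (simp add: power2_eq_square mult_dvd_mono)
    ultimately show "[(x - int i) * (x - int (M - i)) = int i * int (M - i)] (mod q^2)"
      by (simp add: cong_iff_dvd_diff)
  qed
  then show ?thesis using P[of "\<lambda>i. x - int i"] P[of "\<lambda>i. int i"] by simp
qed

lemma fact_int_prod: "k \<ge> 1 \<Longrightarrow> int (fact (k-1)) = (\<Prod>i\<in>{1..<k}. int i)"
proof -
  assume k: "k \<ge> 1"
  have "{1..<k} = {1..k-1}" using k by auto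
  then show ?thesis by (simp add: fact_prod)
qed

lemma split_mult:
  fixes p n :: nat and f :: "nat \<Rightarrow> int"
  assumes p: "prime p"
  shows "(\<Prod>i\<in>{1..<p*n}. f i) = (\<Prod>j\<in>{1..<n}. f (p*j)) * (\<Prod>i\<in>{i\<in>{1..<p*n}. \<not> p dvd i}. f i)"
proof -
  have p0: "p > 0" using prime_gt_0_nat[OF p] .
  have U: "{1..<p*n} = (\<lambda>j. p*j) ` {1..<n} \<union> {i\<in>{1..<p*n}. \<not> p dvd i}"
  proof (rule equalityI)
    show "{1..<p*n} \<subseteq> (\<lambda>j. p*j) ` {1..<n} \<union> {i\<in>{1..<p*n}. \<not> p dvd i}"
    proof
      fix i assume i: "i \<in> {1..<p*n}"
      show "i \<in> (\<lambda>j. p*j) ` {1..<n} \<union> {i\<in>{1..<p*n}. \<not> p dvd i}"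
      proof (cases "p dvd i")
        case True
        then obtain j where j: "i = p*j" by blast
        then have "j \<in> {1..<n}" using i p0 by (auto simp: Suc_le_eq)
        then show ?thesis using j by blast
      next
        case False then show ?thesis using i by blast
      qed
    qed
  next
    show "(\<lambda>j. p*j) ` {1..<n} \<union> {i\<in>{1..<p*n}. \<not> p dvd i} \<subseteq> {1..<p*n}"
      using p0 by (auto simp: Suc_le_eq)
  qed
  have disj: "(\<lambda>j. p*j) ` {1..<n} \<inter> {i\<in>{1..<p*n}. \<not> p dvd i} = {}" by auto
  have inj: "inj_on (\<lambda>j. p*j) {1..<n}" using p0 by (auto simp: inj_on_def)
  show ?thesis by (subst U, subst prod.union_disjoint) (use disj inj in \<open>auto simp: prod.reindex\<close>)
qed

lemma epow: "((-1::int)^(a+1))^k = (if even ((a+1)*k) then 1 else -1)"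
  by (subst power_mult[symmetric]) (simp add: minus_one_power_iff)

lemma core:
  fixes p n a r :: nat
  assumes p: "prime p" and n: "n \<ge> 1" and a: "a \<ge> 1" and r: "r \<ge> 1" and pr: "p^r dvd p*n"
  shows "[(-1::int)^((a+1)*(p*n)) * int (binomial (p*n*a-1) (p*n-1))
          = (-1)^((a+1)*n) * int (binomial (n*a-1) (n-1))] (mod int p^(2*r))"
proof -
  define M where "M = p*n"
  define S where "S = {i\<in>{1..<M}. \<not> p dvd i}"
  define D where "D = (\<Prod>i\<in>S. int i)"
  define x where "x = int (M*a)"
  define Q where "Q = (\<Prod>i\<in>S. x - int i)"
  define B1 where "B1 = int (binomial (M*a-1) (M-1))"
  define Bn where "Bn = int (binomial (n*a-1) (n-1))"
  define e where "e = ((-1::int)^(a+1))"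
  have p0: "p > 0" and p1: "p > 1" using prime_gt_0_nat[OF p] prime_gt_1_nat[OF p] by auto
  have M1: "M \<ge> 1" using n p0 unfolding M_def by (simp add: Suc_le_eq)
  have finS: "finite S" unfolding S_def by simp
  have pw: "(\<Prod>j\<in>{1..<n}. int p) = int p ^ (n-1)" by simp
  have E1: "int (fact (M-1)) * B1 = int p ^ (n-1) * (int (fact (n-1)) * Bn) * Q"
  proof -
    have "int (fact (M-1)) * B1 = (\<Prod>i\<in>{1..<M}. x - int i)"
      unfolding B1_def x_def using F1[OF M1 a] .
    also have "\<dots> = (\<Prod>j\<in>{1..<n}. x - int (p*j)) * Q"
      unfolding M_def Q_def S_def by (rule split_mult[OF p])
    also have "(\<Prod>j\<in>{1..<n}. x - int (p*j)) = (\<Prod>j\<in>{1..<n}. int p * (int (n*a) - int j))"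
      unfolding x_def M_def by (intro prod.cong) (auto simp: algebra_simps)
    also have "\<dots> = int p ^ (n-1) * (\<Prod>j\<in>{1..<n}. int (n*a) - int j)"
      by (simp add: prod.distrib)
    also have "(\<Prod>j\<in>{1..<n}. int (n*a) - int j) = int (fact (n-1)) * Bn"
      unfolding Bn_def using F1[OF n a] by simp
    finally show ?thesis .
  qed
  have E2: "int (fact (M-1)) = int p ^ (n-1) * int (fact (n-1)) * D"
  proof -
    have "int (fact (M-1)) = (\<Prod>i\<in>{1..<M}. int i)" using fact_int_prod[OF M1] .
    also have "\<dots> = (\<Prod>j\<in>{1..<n}. int (p*j)) * D"
      unfolding M_def D_def S_def by (rule split_mult[OF p])
    also have "(\<Prod>j\<in>{1..<n}. int (p*j)) = int p ^ (n-1) * (\<Prod>j\<in>{1..<n}. int j)"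
      by (simp add: prod.distrib)
    also have "(\<Prod>j\<in>{1..<n}. int j) = int (fact (n-1))" using fact_int_prod[OF n] by simp
    finally show ?thesis by simp
  qed
  have DB: "D * B1 = Bn * Q"
  proof -
    have nz: "int p ^ (n-1) * int (fact (n-1)) \<noteq> 0" using p0 by simp
    have "(int p ^ (n-1) * int (fact (n-1))) * (D * B1) = (int p ^ (n-1) * int (fact (n-1))) * (Bn * Q)"
      using E1 E2 by (simp add: algebra_simps)
    then show ?thesis using nz mult_left_cancel by blast
  qed
  have cop: "coprime D (int p ^ (2*r))"
  proof -
    have "coprime D (int p)" unfolding D_def
    proof (rule prod_coprime_left)
      fix i assume "i \<in> S"
      then have "\<not> int p dvd int i" unfolding S_def by simp
      moreover have "prime (int p)" using p by simp
      ultimately show "coprime (int i) (int p)" using prime_imp_coprime coprime_commute by blast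
    qed
    then show ?thesis by simp
  qed
  have prM: "int p ^ r dvd int M" using pr unfolding M_def by (metis of_nat_dvd_iff of_nat_power)
  have prx: "int p ^ r dvd x" unfolding x_def using prM by simp
  have refl: "\<And>i. i \<in> S \<Longrightarrow> M - i \<in> S"
  proof -
    fix i assume i: "i \<in> S"
    have pM: "p dvd M" unfolding M_def by simp
    have "\<not> p dvd M - i"
    proof
      assume "p dvd M - i"
      then have "p dvd M - (M - i)" using pM by (simp add: dvd_diff_nat)
      then show False using i S_def by auto
    qed
    then show "M - i \<in> S" using i unfolding S_def by auto
  qed
  have sub: "S \<subseteq> {1..<M}" unfolding S_def by auto
  have eM: "e^M = (-1)^((a+1)*(p*n))" unfolding e_def M_def by (simp only: power_mult)
  have en: "e^n = (-1)^((a+1)*n)" unfolding e_def by (simp only: power_mult)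
  have goal_form: "?thesis \<longleftrightarrow> [e^M * B1 = e^n * Bn] (mod int p^(2*r))"
    unfolding B1_def Bn_def M_def eM[unfolded M_def] en by simp
  show ?thesis
  proof (cases "odd p \<or> even n")
    case True
    have mid: "\<And>i. i \<in> S \<Longrightarrow> 2*i \<noteq> M"
    proof
      fix i assume i: "i \<in> S" and h: "2*i = M"
      show False
      proof (cases "odd p")
        case True
        have "p dvd 2*i" using h M_def by simp
        then have "p dvd 2 \<or> p dvd i" using p prime_dvd_mult_iff by blast
        moreover have "\<not> p dvd 2"
        proof
          assume "p dvd 2"
          then have "p \<le> 2" by (simp add: dvd_imp_le)
          then have "p = 2" using p1 by simp
          then show False using True by simp
        qed
        ultimately show False using i S_def by auto
      next
        case False
        then have "even n" using \<open>odd p \<or> even n\<close> by simp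
        have "2 dvd p" using False by simp
        then have "p = 2" using p unfolding prime_nat_iff by auto
        then have "i = n" using h M_def by simp
        then show False using i S_def \<open>even n\<close> \<open>p = 2\<close> by auto
      qed
    qed
    have QD: "[Q = D] (mod (int p ^ r)^2)"
      unfolding Q_def D_def by (rule pair_prod[OF finS sub refl mid prx prM])
    have QD': "[Q = D] (mod int p^(2*r))" using QD by (simp add: power_mult power_mult_distrib mult.commute)
    have sgn: "e^M = e^n"
    proof (cases "odd p")
      case True
      have "even ((a+1)*M) = even ((a+1)*n)" unfolding M_def using True by simp
      then show ?thesis unfolding e_def epow by simp
    next
      case False
      then have "even n" using True by simp
      moreover have "even M" unfolding M_def using \<open>even n\<close> by simp
      ultimately show ?thesis unfolding e_def epow by simp
    qed
    have "[D * B1 = D * Bn] (mod int p^(2*r))"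
      using DB cong_mult[OF cong_refl[of Bn] QD'] by (simp add: mult.commute)
    then have "[B1 = Bn] (mod int p^(2*r))" using cong_mult_lcancel[OF cop] by blast
    then show ?thesis unfolding goal_form sgn by (simp add: cong_mult)
  next
    case False
    then have on: "odd n" and ep: "even p" by auto
    have "2 dvd p" using ep by simp
    then have p2: "p = 2" using p unfolding prime_nat_iff by auto
    have r1: "r = 1"
    proof (rule ccontr)
      assume "r \<noteq> 1"
      then have "(2::nat)^2 dvd 2^r" using r by (intro le_imp_power_dvd) simp
      then have "(2::nat)^2 dvd 2*n" using pr p2 dvd_trans by blast
      then have "4 dvd 2*n" by simp
      then show False using on by presburger
    qed
    define S' where "S' = S - {n}"
    have nS: "n \<in> S" unfolding S_def M_def using on n p2 by auto
    have finS': "finite S'" using finS S'_def by simp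
    have sub': "S' \<subseteq> {1..<M}" using sub S'_def by auto
    have refl': "\<And>i. i \<in> S' \<Longrightarrow> M - i \<in> S'"
    proof -
      fix i assume i: "i \<in> S'"
      then have iS: "i \<in> S" and "i \<noteq> n" and "i < M" using S'_def sub by auto
      then have "M - i \<noteq> n" unfolding M_def p2 by simp
      then show "M - i \<in> S'" using refl[OF iS] S'_def by simp
    qed
    have mid': "\<And>i. i \<in> S' \<Longrightarrow> 2*i \<noteq> M" using S'_def M_def p2 by auto
    have QD: "[(\<Prod>i\<in>S'. x - int i) = (\<Prod>i\<in>S'. int i)] (mod (int p ^ r)^2)"
      by (rule pair_prod[OF finS' sub' refl' mid' prx prM])
    then have QD: "[(\<Prod>i\<in>S'. x - int i) = (\<Prod>i\<in>S'. int i)] (mod 4)" using p2 r1 by simp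
    have SS: "S = insert n S'" using nS S'_def by auto
    have nS': "n \<notin> S'" unfolding S'_def by simp
    have Qs: "Q = (x - int n) * (\<Prod>i\<in>S'. x - int i)" unfolding Q_def SS by (rule prod.insert[OF finS' nS'])
    have Ds: "D = int n * (\<Prod>i\<in>S'. int i)" unfolding D_def SS by (rule prod.insert[OF finS' nS'])
    have xn: "[x - int n = e * int n] (mod 4)"
    proof -
      have "x - int n = int n * (2 * int a - 1)" unfolding x_def M_def p2 by (simp add: algebra_simps)
      moreover have "[2 * int a - 1 = e] (mod 4)"
      proof (cases "even a")
        case True
        have "e = -1" unfolding e_def using True by simp
        moreover obtain b where "a = 2*b" using True by blast
        ultimately show ?thesis by (simp add: cong_iff_dvd_diff)
      next
        case False
        have "e = 1" unfolding e_def using False by simp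
        moreover obtain b where "a = 2*b+1" using False oddE by blast
        ultimately show ?thesis by (simp add: cong_iff_dvd_diff)
      qed
      then have "[int n * (2 * int a - 1) = int n * e] (mod 4)" by (rule cong_scalar_left)
      ultimately show ?thesis by (simp add: mult.commute)
    qed
    have QeD: "[Q = e * D] (mod 4)"
    proof -
      have "[Q = (e * int n) * (\<Prod>i\<in>S'. int i)] (mod 4)" unfolding Qs by (rule cong_mult[OF xn QD])
      then show ?thesis unfolding Ds by (simp add: mult.assoc)
    qed
    have cop4: "coprime D 4" using cop p2 r1 by simp
    have "[D * B1 = D * (e * Bn)] (mod 4)"
      using DB cong_mult[OF cong_refl[of Bn] QeD] by (simp add: algebra_simps)
    then have "[B1 = e * Bn] (mod 4)" using cong_mult_lcancel[OF cop4] by blast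
    moreover have "e^M = 1" unfolding e_def epow M_def p2 by simp
    moreover have "e^n = e" using on unfolding e_def epow
      by (simp add: minus_one_power_iff)
    ultimately show ?thesis unfolding goal_form using p2 r1 by simp
  qed
qed



lemma dsum:
  fixes f :: "nat \<Rightarrow> nat \<Rightarrow> 'a::comm_monoid_add"
  assumes l: "l \<ge> 1"
  shows "(\<Sum>d\<in>{d. d dvd l}. \<Sum>e\<in>{e. e dvd d}. f d e) = (\<Sum>e\<in>{e. e dvd l}. \<Sum>j\<in>{j. j dvd l div e}. f (e*j) e)"
proof -
  have l0: "l > 0" using l by simp
  have fin1: "finite {d. d dvd l}" using l0 by simp
  have "(\<Sum>d\<in>{d. d dvd l}. \<Sum>e\<in>{e. e dvd d}. f d e) = (\<Sum>(d,e)\<in>(SIGMA d:{d. d dvd l}. {e. e dvd d}). f d e)"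
  proof (rule sum.Sigma)
    show "finite {d. d dvd l}" using fin1 .
    show "\<forall>d\<in>{d. d dvd l}. finite {e. e dvd d}"
    proof
      fix d assume "d \<in> {d. d dvd l}"
      then have "d > 0" using l0 by (auto intro: Nat.gr0I)
      then show "finite {e. e dvd d}" by simp
    qed
  qed
  also have "\<dots> = (\<Sum>(e,j)\<in>(SIGMA e:{e. e dvd l}. {j. j dvd l div e}). f (e*j) e)"
  proof (rule sum.reindex_bij_witness[where i = "\<lambda>(e,j). (e*j, e)" and j = "\<lambda>(d,e). (e, d div e)"])
    fix a assume "a \<in> (SIGMA d:{d. d dvd l}. {e. e dvd d})"
    then obtain d e where a: "a = (d,e)" "d dvd l" "e dvd d" by auto
    have el: "e dvd l" by (rule dvd_trans[OF a(3) a(2)])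
    have dl: "d div e dvd l div e" using div_dvd_div[OF a(3) el] a(2) by simp
    have ed: "e * (d div e) = d" using a(3) by simp
    show "(case case a of (d, e) \<Rightarrow> (e, d div e) of (e, j) \<Rightarrow> (e * j, e)) = a" using a(1) ed by simp
    show "(case a of (d, e) \<Rightarrow> (e, d div e)) \<in> (SIGMA e:{e. e dvd l}. {j. j dvd l div e})"
      using a(1) el dl by simp
    show "(case case a of (d, e) \<Rightarrow> (e, d div e) of (e, j) \<Rightarrow> f (e * j) e) = (case a of (d, e) \<Rightarrow> f d e)"
      using a(1) ed by simp
  next
    fix b assume "b \<in> (SIGMA e:{e. e dvd l}. {j. j dvd l div e})"
    then obtain e j where b: "b = (e,j)" "e dvd l" "j dvd l div e" by auto
    have e0: "e \<noteq> 0" using b(2) l0 by (metis dvd_0_left_iff less_irrefl)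
    show "(case case b of (e, j) \<Rightarrow> (e * j, e) of (d, e) \<Rightarrow> (e, d div e)) = b" using b(1) e0 by simp
    have "e * j dvd e * (l div e)" using b(3) by (rule mult_dvd_mono[OF dvd_refl])
    then have "e * j dvd l" using b(2) by simp
    then show "(case b of (e, j) \<Rightarrow> (e * j, e)) \<in> (SIGMA d:{d. d dvd l}. {e. e dvd d})" using b(1) by simp
  qed
  also have "\<dots> = (\<Sum>e\<in>{e. e dvd l}. \<Sum>j\<in>{j. j dvd l div e}. f (e*j) e)"
  proof (rule sum.Sigma[symmetric])
    show "finite {e. e dvd l}" using fin1 .
    show "\<forall>e\<in>{e. e dvd l}. finite {j. j dvd l div e}"
    proof
      fix e assume "e \<in> {e. e dvd l}"
      then have "e dvd l" by simp
      then have "l div e > 0" using l0 by (metis dvd_div_eq_0_iff gr0I less_irrefl)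
      then show "finite {j. j dvd l div e}" by simp
    qed
  qed
  finally show ?thesis .
qed

lemma uniq:
  fixes x y :: "nat \<Rightarrow> rat"
  assumes h: "\<And>l. l \<ge> 1 \<Longrightarrow> (\<Sum>d\<in>{d. d dvd l}. of_nat (d^2) * x d) = (\<Sum>d\<in>{d. d dvd l}. of_nat (d^2) * y d)"
  shows "l \<ge> 1 \<Longrightarrow> x l = y l"
proof (induction l rule: less_induct)
  case (less l)
  have dk: "{j. j dvd l} = insert l {j. j dvd l \<and> j < l}"
    using less.prems by (auto dest: dvd_imp_le)
  have fin: "finite {j. j dvd l \<and> j < l}" by simp
  have eq: "(\<Sum>d\<in>{j. j dvd l \<and> j < l}. of_nat (d^2) * x d) = (\<Sum>d\<in>{j. j dvd l \<and> j < l}. of_nat (d^2) * y d)"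
  proof (rule sum.cong)
    fix d assume "d \<in> {j. j dvd l \<and> j < l}"
    then have "d < l" "d \<ge> 1" using less.prems by (auto intro: Nat.gr0I simp: Suc_le_eq)
    then show "of_nat (d^2) * x d = of_nat (d^2) * y d" using less.IH by simp
  qed simp
  have "of_nat (l^2) * x l + (\<Sum>d\<in>{j. j dvd l \<and> j < l}. of_nat (d^2) * x d)
      = of_nat (l^2) * y l + (\<Sum>d\<in>{j. j dvd l \<and> j < l}. of_nat (d^2) * y d)"
    using h[OF less.prems] unfolding dk using fin by (simp add: sum.insert)
  then have "of_nat (l^2) * x l = of_nat (l^2) * y l" using eq by simp
  then show ?case using less.prems by simp
qed


definition cc :: "nat \<Rightarrow> nat \<Rightarrow> nat \<Rightarrow> int" where
  "cc w d k = (if d*w = 1 then (-1)^(k-1) else int (binomial (k*(d*w-1) - 1) (k-1)))"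

definition uu :: "nat \<Rightarrow> nat \<Rightarrow> nat \<Rightarrow> int" where
  "uu w d k = (-1)^(d*k*w+1) * cc w d k"

lemma uu_one: "k \<ge> 1 \<Longrightarrow> ((-1::int)^(k+1)) * (-1)^(k-1) = 1"
  by (cases k) (auto simp: minus_one_power_iff)

lemma uu_cong:
  assumes w: "w \<ge> 1" and e: "e \<ge> 1" and p: "prime p" and r: "r \<ge> 1" and pm: "\<not> p dvd m"
  shows "[uu w e (p^r*m) = uu w e (p^(r-1)*m)] (mod int p^(2*r))"
proof -
  define n where "n = p^(r-1)*m"
  have m0: "m \<noteq> 0" using pm by (metis dvd_0_right)
  have p0: "p > 0" using prime_gt_0_nat[OF p] .
  have n1: "n \<ge> 1" unfolding n_def using m0 p0 by (simp add: Suc_le_eq)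
  have pn: "p^r*m = p*n" unfolding n_def using r
    by (metis Suc_diff_le diff_Suc_1 mult.assoc power_Suc)
  have pn1: "p*n \<ge> 1" using n1 p0 by (simp add: Suc_le_eq)
  show ?thesis
  proof (cases "e*w = 1")
    case True
    then have "e = 1" "w = 1" by auto
    then have "uu w e k = 1" if "k \<ge> 1" for k
      unfolding uu_def cc_def using uu_one[OF that] by simp
    then show ?thesis using n1 pn1 unfolding pn n_def[symmetric] by simp
  next
    case False
    define a where "a = e*w - 1"
    have ew: "e*w \<ge> 1" using e w by simp
    have "e*w \<ge> 2" using False ew by linarith
    then have a1: "a \<ge> 1" unfolding a_def by simp
    have ea: "e*w = a+1" using ew unfolding a_def by simp
    have pr: "p^r dvd p*n" using pn by (metis dvd_triv_left)
    have C: "[(-1::int)^((a+1)*(p*n)) * int (binomial (p*n*a-1) (p*n-1))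
          = (-1)^((a+1)*n) * int (binomial (n*a-1) (n-1))] (mod int p^(2*r))"
      by (rule core[OF p n1 a1 r pr])
    have U: "uu w e k = - ((-1::int)^((a+1)*k) * int (binomial (k*a-1) (k-1)))" for k
    proof -
      have "e*k*w = (e*w)*k" by (simp add: algebra_simps)
      then have "e*k*w = (a+1)*k" using ea by simp
      moreover have "cc w e k = int (binomial (k*a-1) (k-1))"
        by (simp only: cc_def if_not_P[OF False] a_def)
      ultimately show ?thesis unfolding uu_def by simp
    qed
    show ?thesis unfolding pn n_def[symmetric] U cong_minus_minus_iff
      using C by (simp only: mult.commute[of n a] mult.assoc[symmetric])
  qed
qed

lemma Gc:
  assumes k: "k \<ge> 1" and d: "d \<ge> 1" and w: "w \<ge> 1"
  shows "((of_int (int k * (int (d*w) - 1) - 1)) :: rat) gchoose (k-1) = of_int (cc w d k)"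
proof (cases "d*w = 1")
  case True
  then have "int k * (int (d*w) - 1) - 1 = -1" by simp
  moreover have "((-1::rat) gchoose j) = (-1)^j" for j
    using gbinomial_minus[of "1::rat" j] binomial_gbinomial[of j j] by simp
  ultimately show ?thesis unfolding cc_def using True by simp
next
  case False
  then have dw: "d*w \<ge> 2" using d w by (metis One_nat_def Suc_1 Suc_leI le_neq_implies_less mult_eq_0_iff not_one_le_zero neq0_conv)
  have kk: "k*(d*w-1) \<ge> 1" using k dw by (simp add: Suc_le_eq)
  have "int k * (int (d*w) - 1) - 1 = int (k*(d*w-1) - 1)" using kk dw by (simp add: of_nat_diff algebra_simps)
  then have "((of_int (int k * (int (d*w) - 1) - 1)) :: rat) = of_nat (k*(d*w-1) - 1)" by simp
  moreover have "cc w d k = int (binomial (k*(d*w-1) - 1) (k-1))" by (simp only: cc_def if_not_P[OF False])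
  ultimately show ?thesis by (simp add: binomial_gbinomial)
qed


lemma sign_sq: "((-1::rat)^x) * (-1)^x = 1"
  by (simp add: minus_one_power_iff)

theorem theorem1p8:
  fixes w :: nat
    and N I n nS :: "nat \<Rightarrow> rat"
  assumes w_pos: "w \<ge> 1"
    and rel: "\<And>d. d \<ge> 1 \<Longrightarrow>
         N d = (-1) ^ (d * w + 1) * of_nat (d * w) * I d"
    and ser1: "\<And>l. l \<ge> 1 \<Longrightarrow>
         I l = (\<Sum>d | d dvd l. n d * (1 / of_nat (l div d) ^ 3))"
    and ser2: "\<And>l. l \<ge> 1 \<Longrightarrow>
         N l = (\<Sum>d | d dvd l. nS d * (1 / of_nat (l div d) ^ 2) *
                  ((of_int (int (l div d) * (int (d * w) - 1) - 1) :: rat)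
                     gchoose (l div d - 1)))"
  shows "(\<forall>d \<ge> 1. nS d \<in> \<int>) \<longleftrightarrow> (\<forall>d \<ge> 1. of_nat (d * w) * n d \<in> \<int>)"
proof -
  define m where "m d = of_nat (d*w) * n d" for d
  have divpos: "\<And>l d :: nat. l \<ge> 1 \<Longrightarrow> d dvd l \<Longrightarrow> d \<ge> 1 \<and> l div d \<ge> 1 \<and> l = d * (l div d)"
  proof -
    fix l d :: nat assume l: "l \<ge> 1" and d: "d dvd l"
    have "d \<noteq> 0" using l d by (metis dvd_0_left_iff not_one_le_zero)
    moreover have "l div d \<noteq> 0" using l d by (metis dvd_mult_div_cancel mult_0_right not_one_le_zero)
    ultimately show "d \<ge> 1 \<and> l div d \<ge> 1 \<and> l = d * (l div d)" using d by simp
  qed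
  have E4: "(\<Sum>d\<in>{d. d dvd l}. of_nat (d^2) * m d) = of_nat (l^2) * ((-1)^(l*w+1) * N l)"
    if l: "l \<ge> 1" for l
  proof -
    have "of_nat (l^2) * ((-1)^(l*w+1) * N l)
        = of_nat (l^2) * (((-1)^(l*w+1) * (-1)^(l*w+1)) * of_nat (l*w) * I l)"
      using rel[OF l] by (simp add: mult.assoc)
    also have "\<dots> = of_nat (l^2) * of_nat (l*w) * I l" by (simp only: sign_sq mult_1_left mult_1_right)
    also have "\<dots> = (\<Sum>d\<in>{d. d dvd l}. of_nat (l^2) * of_nat (l*w) * (n d * (1 / of_nat (l div d) ^ 3)))"
      using ser1[OF l] by (simp add: sum_distrib_left)
    also have "\<dots> = (\<Sum>d\<in>{d. d dvd l}. of_nat (d^2) * m d)"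
    proof (rule sum.cong)
      fix d assume "d \<in> {d. d dvd l}"
      then have h: "d \<ge> 1" "l div d \<ge> 1" "l = d * (l div d)" using divpos[OF l] by auto
      define k where "k = l div d"
      have k0: "(of_nat k :: rat) \<noteq> 0" using h k_def by simp
      have l': "(of_nat l :: rat) = of_nat d * of_nat k" using h k_def by (metis of_nat_mult)
      show "of_nat (l^2) * of_nat (l*w) * (n d * (1 / of_nat (l div d) ^ 3)) = of_nat (d^2) * m d"
        unfolding m_def k_def[symmetric] using k0 l' by (simp add: field_simps power2_eq_square power3_eq_cube)
    qed simp
    finally show ?thesis by simp
  qed
  have E5: "of_nat (l^2) * N l = (\<Sum>d\<in>{d. d dvd l}. of_nat (d^2) * nS d * of_int (cc w d (l div d)))"
    if l: "l \<ge> 1" for l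
  proof -
    have "of_nat (l^2) * N l = (\<Sum>d\<in>{d. d dvd l}. of_nat (l^2) * (nS d * (1 / of_nat (l div d) ^ 2) *
                  ((of_int (int (l div d) * (int (d * w) - 1) - 1) :: rat) gchoose (l div d - 1))))"
      using ser2[OF l] by (simp add: sum_distrib_left)
    also have "\<dots> = (\<Sum>d\<in>{d. d dvd l}. of_nat (d^2) * nS d * of_int (cc w d (l div d)))"
    proof (rule sum.cong)
      fix d assume "d \<in> {d. d dvd l}"
      then have h: "d \<ge> 1" "l div d \<ge> 1" "l = d * (l div d)" using divpos[OF l] by auto
      define k where "k = l div d"
      have k0: "(of_nat k :: rat) \<noteq> 0" using h k_def by simp
      have l': "(of_nat l :: rat) = of_nat d * of_nat k" using h k_def by (metis of_nat_mult)
      have G: "((of_int (int k * (int (d * w) - 1) - 1) :: rat) gchoose (k - 1)) = of_int (cc w d k)"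
        using Gc[of k d w] h k_def w_pos by simp
      show "of_nat (l^2) * (nS d * (1 / of_nat (l div d) ^ 2) *
                  ((of_int (int (l div d) * (int (d * w) - 1) - 1) :: rat) gchoose (l div d - 1)))
            = of_nat (d^2) * nS d * of_int (cc w d (l div d))"
        unfolding k_def[symmetric] G using k0 l' by (simp add: field_simps power2_eq_square)
    qed simp
    finally show ?thesis .
  qed
  define T where "T e j = tt (uu w e) j" for e j
  have Tid: "uu w e k = (\<Sum>j\<in>{j. j dvd k}. int (j^2) * T e j)" if "e \<ge> 1" "k \<ge> 1" for e k
    unfolding T_def
    by (rule tt_ok[OF uu_cong[OF w_pos that(1)] that(2)])
  define mm where "mm l = (\<Sum>e\<in>{e. e dvd l}. nS e * of_int (T e (l div e)))" for l
  have key: "(\<Sum>d\<in>{d. d dvd l}. of_nat (d^2) * mm d) = (\<Sum>d\<in>{d. d dvd l}. of_nat (d^2) * m d)"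
    if l: "l \<ge> 1" for l
  proof -
    have "(\<Sum>d\<in>{d. d dvd l}. of_nat (d^2) * mm d)
        = (\<Sum>d\<in>{d. d dvd l}. \<Sum>e\<in>{e. e dvd d}. of_nat (d^2) * (nS e * of_int (T e (d div e))))"
      unfolding mm_def by (simp add: sum_distrib_left)
    also have "\<dots> = (\<Sum>e\<in>{e. e dvd l}. \<Sum>j\<in>{j. j dvd l div e}.
                     of_nat ((e*j)^2) * (nS e * of_int (T e ((e*j) div e))))"
      by (rule dsum[OF l])
    also have "\<dots> = (\<Sum>e\<in>{e. e dvd l}. of_nat (e^2) * nS e * of_int (uu w e (l div e)))"
    proof (rule sum.cong)
      fix e assume "e \<in> {e. e dvd l}"
      then have h: "e \<ge> 1" "l div e \<ge> 1" using divpos[OF l] by auto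
      have "(\<Sum>j\<in>{j. j dvd l div e}. of_nat ((e*j)^2) * (nS e * of_int (T e ((e*j) div e))))
          = (\<Sum>j\<in>{j. j dvd l div e}. (of_nat (e^2) * nS e) * of_int (int (j^2) * T e j))"
        using h by (intro sum.cong) (auto simp: power_mult_distrib)
      also have "\<dots> = of_nat (e^2) * nS e * of_int (\<Sum>j\<in>{j. j dvd l div e}. int (j^2) * T e j)"
        by (simp add: sum_distrib_left)
      also have "\<dots> = of_nat (e^2) * nS e * of_int (uu w e (l div e))" using Tid[OF h] by simp
      finally show "(\<Sum>j\<in>{j. j dvd l div e}. of_nat ((e*j)^2) * (nS e * of_int (T e ((e*j) div e))))
          = of_nat (e^2) * nS e * of_int (uu w e (l div e))" .
    qed simp
    also have "\<dots> = (\<Sum>e\<in>{e. e dvd l}. (-1)^(l*w+1) * (of_nat (e^2) * nS e * of_int (cc w e (l div e))))"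
    proof (rule sum.cong)
      fix e assume "e \<in> {e. e dvd l}"
      then have h: "l = e * (l div e)" using divpos[OF l] by auto
      have hh: "e * (l div e) * w = l * w" using h by simp
      show "of_nat (e^2) * nS e * of_int (uu w e (l div e))
          = (-1)^(l*w+1) * (of_nat (e^2) * nS e * of_int (cc w e (l div e)))"
        unfolding uu_def hh by simp
    qed simp
    also have "\<dots> = (-1)^(l*w+1) * (of_nat (l^2) * N l)"
      using E5[OF l] by (simp add: sum_distrib_left)
    also have "\<dots> = (\<Sum>d\<in>{d. d dvd l}. of_nat (d^2) * m d)"
      using E4[OF l] by simp
    finally show ?thesis .
  qed
  have mm_eq: "mm l = m l" if "l \<ge> 1" for l
    using uniq[of mm m, OF key] that by blast
  have T1: "T l 1 = (-1)^(l*w+1)" for l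
  proof -
    have e: "{j::nat. j dvd 1 \<and> j < 1} = {}" by auto
    have "T l 1 = uu w l 1" unfolding T_def by (subst tt.simps) (simp only: e sum.empty, simp)
    also have "\<dots> = (-1)^(l*w+1)" unfolding uu_def cc_def by simp
    finally show ?thesis .
  qed
  show ?thesis
  proof
    assume H: "\<forall>d\<ge>1. nS d \<in> \<int>"
    show "\<forall>d\<ge>1. of_nat (d * w) * n d \<in> \<int>"
    proof (intro allI impI)
      fix d :: nat assume d: "d \<ge> 1"
      have "mm d \<in> \<int>" unfolding mm_def
      proof (rule Ints_sum)
        fix e assume "e \<in> {e. e dvd d}"
        then have "e \<ge> 1" using divpos[OF d] by auto
        then show "nS e * of_int (T e (d div e)) \<in> \<int>" using H by (simp add: Ints_mult)
      qed
      then show "of_nat (d * w) * n d \<in> \<int>" using mm_eq[OF d] m_def by simp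
    qed
  next
    assume H: "\<forall>d\<ge>1. of_nat (d * w) * n d \<in> \<int>"
    have "nS l \<in> \<int>" if "l \<ge> 1" for l
      using that
    proof (induction l rule: less_induct)
      case (less l)
      have dk: "{j. j dvd l} = insert l {j. j dvd l \<and> j < l}"
        using less.prems by (auto dest: dvd_imp_le)
      define R where "R = (\<Sum>e\<in>{j. j dvd l \<and> j < l}. nS e * of_int (T e (l div e)))"
      have R: "R \<in> \<int>" unfolding R_def
      proof (rule Ints_sum)
        fix e assume e: "e \<in> {j. j dvd l \<and> j < l}"
        then have "e \<ge> 1" using divpos[OF less.prems] by auto
        then have "nS e \<in> \<int>" using less.IH e by auto
        then show "nS e * of_int (T e (l div e)) \<in> \<int>" by (simp add: Ints_mult)
      qed
      have "mm l = nS l * of_int (T l 1) + R"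
        unfolding mm_def R_def dk using less.prems by (subst sum.insert) auto
      then have "m l = nS l * (-1)^(l*w+1) + R" using mm_eq[OF less.prems] T1 by simp
      then have mR: "m l - R = nS l * (-1)^(l*w+1)" by simp
      have "(-1)^(l*w+1) * (m l - R) = nS l * ((-1)^(l*w+1) * (-1)^(l*w+1))"
        unfolding mR by (simp only: ac_simps)
      then have "nS l = (-1)^(l*w+1) * (m l - R)" by (simp only: sign_sq mult_1_right)
      moreover have "m l \<in> \<int>" using H less.prems m_def by simp
      ultimately show ?case using R by (simp add: Ints_mult Ints_diff)
    qed
    then show "\<forall>d\<ge>1. nS d \<in> \<int>" by blast
  qed
qed

end
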